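(* Let $k\ge1$ and let $\pi_0,\dots,\pi_{k-1}$ be (possibly random) policies. Then for every $s\in\mathcal S$, $$\sum_{t=0}^{k-1}\mathbb E_{\{\pi_t\}}\big[V^{\pi_t}(s)-V^{\pi^*}(s)\big]\;\le\;(1-\gamma)^{-1}\max_{s'\in\mathcal S}\mathbb E_{\{\pi_t\}}\big[g^{\pi_{[k]}}(s')\big],$$ where the aggregated advantage gap function is $g^{\pi_{[k]}}(s):=\max_{p\in\Delta_{|\mathcal A|}}\big\{-\sum_{t=0}^{k-1}\psi^{\pi_t}(s,p)\big\}$.
   Context: An infinite-horizon discounted MDP is given by a finite state space $\mathcal S$, a finite action space $\mathcal A$, transition probabilities $\mathcal P(s'\mid s,a)$, a cost $c:\mathcal S\times\mathcal A\to\mathbb R$ and a discount factor $\gamma\in[0,1)$. $\Delta_{|\mathcal A|}$ is the probability simplex over $\mathcal A$. A policy $\pi$ assigns $\pi(\cdot\mid s)\in\Delta_{|\mathcal A|}$ to each state. For each $s$, $p\mapsto h^{p}(s)$ is a closed convex function on $\Delta_{|\mathcal A|}$ (regularizer). $V^\pi(s)=\mathbb E\big[\sum_{t\ge0}\gamma^t(c(s_t,a_t)+h^{\pi(\cdot\mid s_t)}(s_t))\mid s_0=s,\ a_t\sim\pi(\cdot\mid s_t),\ s_{t+1}\sim\mathcal P(\cdot\mid s_t,a_t)\big]$, and $Q^\pi(s,a)$ is the same with $a_0=a$. $\pi^*$ is an optimal policy: $V^{\pi^*}(s)\le V^\pi(s)$ for all $\pi$, $s$. The advantage function is $\psi^\pi(s,p):=\langle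 Q^\pi(s,\cdot),p\rangle-V^\pi(s)+h^{p}(s)-h^{\pi(\cdot\mid s)}(s)$ for $p\in\Delta_{|\mathcal A|}$. $\mathbb E_{\{\pi_t\}}$ denotes expectation over the randomness of the policies. *)

theory Defs
  imports "HOL-Analysis.Analysis" "HOL-Probability.Probability"
begin

text \<open>A distribution over actions is a vector in real^'a; P s a s' is the
  transition probability P(s'|s,a); c s a is the cost; h s p is the regularizer.\<close>

definition prob_simplex :: "(real^'a::finite) set" where
  "prob_simplex = {p. (\<forall>a. 0 \<le> p $ a) \<and> (\<Sum>a\<in>UNIV. p $ a) = 1}"

definition is_policy :: "('s \<Rightarrow> real^'a::finite) \<Rightarrow> bool" where
  "is_policy \<pi> \<longleftrightarrow> (\<forall>s. \<pi> s \<in> prob_simplex)"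

definition is_mdp :: "('s::finite \<Rightarrow> 'a::finite \<Rightarrow> 's \<Rightarrow> real) \<Rightarrow> real \<Rightarrow> bool" where
  "is_mdp P \<gamma> \<longleftrightarrow> (\<forall>s a s'. 0 \<le> P s a s') \<and> (\<forall>s a. (\<Sum>s'\<in>UNIV. P s a s') = 1)
     \<and> 0 \<le> \<gamma> \<and> \<gamma> < 1"

definition closed_fun_on :: "'b::topological_space set \<Rightarrow> ('b \<Rightarrow> real) \<Rightarrow> bool" where
  "closed_fun_on S f \<longleftrightarrow> (\<forall>c. closed {x\<in>S. f x \<le> c})"

definition trans_pol ::
  "('s::finite \<Rightarrow> 'a::finite \<Rightarrow> 's \<Rightarrow> real) \<Rightarrow> ('s \<Rightarrow> real^'a) \<Rightarrow> 's \<Rightarrow> 's \<Rightarrow> real" where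
  "trans_pol P \<pi> s s' = (\<Sum>a\<in>UNIV. \<pi> s $ a * P s a s')"

definition stage_cost ::
  "('s \<Rightarrow> 'a::finite \<Rightarrow> real) \<Rightarrow> ('s \<Rightarrow> real^'a \<Rightarrow> real) \<Rightarrow> ('s \<Rightarrow> real^'a) \<Rightarrow> 's \<Rightarrow> real" where
  "stage_cost c h \<pi> s = (\<Sum>a\<in>UNIV. \<pi> s $ a * c s a) + h s (\<pi> s)"

fun step_dist ::
  "('s::finite \<Rightarrow> 'a::finite \<Rightarrow> 's \<Rightarrow> real) \<Rightarrow> ('s \<Rightarrow> real^'a) \<Rightarrow> nat \<Rightarrow> 's \<Rightarrow> 's \<Rightarrow> real" where
  "step_dist P \<pi> 0 s s' = (if s = s' then 1 else 0)"
| "step_dist P \<pi> (Suc n) s s' = (\<Sum>s''\<in>UNIV. step_dist P \<pi> n s s'' * trans_pol P \<pi> s'' s')"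

definition V_fun ::
  "('s::finite \<Rightarrow> 'a::finite \<Rightarrow> 's \<Rightarrow> real) \<Rightarrow> ('s \<Rightarrow> 'a \<Rightarrow> real) \<Rightarrow> ('s \<Rightarrow> real^'a \<Rightarrow> real)
    \<Rightarrow> real \<Rightarrow> ('s \<Rightarrow> real^'a) \<Rightarrow> 's \<Rightarrow> real" where
  "V_fun P c h \<gamma> \<pi> s =
     (\<Sum>n. \<gamma> ^ n * (\<Sum>s'\<in>UNIV. step_dist P \<pi> n s s' * stage_cost c h \<pi> s'))"

definition Q_fun ::
  "('s::finite \<Rightarrow> 'a::finite \<Rightarrow> 's \<Rightarrow> real) \<Rightarrow> ('s \<Rightarrow> 'a \<Rightarrow> real) \<Rightarrow> ('s \<Rightarrow> real^'a \<Rightarrow> real)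
    \<Rightarrow> real \<Rightarrow> ('s \<Rightarrow> real^'a) \<Rightarrow> 's \<Rightarrow> 'a \<Rightarrow> real" where
  "Q_fun P c h \<gamma> \<pi> s a =
     c s a + h s (\<pi> s) + \<gamma> * (\<Sum>s'\<in>UNIV. P s a s' * V_fun P c h \<gamma> \<pi> s')"

definition psi_fun ::
  "('s::finite \<Rightarrow> 'a::finite \<Rightarrow> 's \<Rightarrow> real) \<Rightarrow> ('s \<Rightarrow> 'a \<Rightarrow> real) \<Rightarrow> ('s \<Rightarrow> real^'a \<Rightarrow> real)
    \<Rightarrow> real \<Rightarrow> ('s \<Rightarrow> real^'a) \<Rightarrow> 's \<Rightarrow> real^'a \<Rightarrow> real" where
  "psi_fun P c h \<gamma> \<pi> s p =
     (\<Sum>a\<in>UNIV. Q_fun P c h \<gamma> \<pi> s a * p $ a) - V_fun P c h \<gamma> \<pi> s + h s p - h s (\<pi> s)"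

definition agg_gap ::
  "('s::finite \<Rightarrow> 'a::finite \<Rightarrow> 's \<Rightarrow> real) \<Rightarrow> ('s \<Rightarrow> 'a \<Rightarrow> real) \<Rightarrow> ('s \<Rightarrow> real^'a \<Rightarrow> real)
    \<Rightarrow> real \<Rightarrow> nat \<Rightarrow> (nat \<Rightarrow> 's \<Rightarrow> real^'a) \<Rightarrow> 's \<Rightarrow> real" where
  "agg_gap P c h \<gamma> k \<pi>s s =
     (SUP p\<in>prob_simplex. - (\<Sum>t<k. psi_fun P c h \<gamma> (\<pi>s t) s p))"

end

theory Submission
  imports Defs
begin


lemma trans_pol_nonneg:
  assumes "is_mdp P \<gamma>" "is_policy \<pi>"
  shows "0 \<le> trans_pol P \<pi> x y"
  using assms unfolding is_mdp_def is_policy_def prob_simplex_def trans_pol_def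
  by (auto intro!: sum_nonneg)

lemma trans_pol_sum:
  assumes "is_mdp P \<gamma>" "is_policy \<pi>"
  shows "(\<Sum>y\<in>UNIV. trans_pol P \<pi> x y) = 1"
proof -
  have "(\<Sum>y\<in>UNIV. trans_pol P \<pi> x y) = (\<Sum>a\<in>UNIV. \<pi> x $ a * (\<Sum>y\<in>UNIV. P x a y))"
    unfolding trans_pol_def by (simp only: sum_distrib_left) (rule sum.swap)
  also have "\<dots> = 1" using assms unfolding is_mdp_def is_policy_def prob_simplex_def by simp
  finally show ?thesis .
qed

lemma step_dist_prop:
  assumes "is_mdp P \<gamma>" "is_policy \<pi>"
  shows "(\<forall>y. 0 \<le> step_dist P \<pi> n x y) \<and> (\<Sum>y\<in>UNIV. step_dist P \<pi> n x y) = 1"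
proof (induction n)
  case 0
  then show ?case by simp
next
  case (Suc n)
  have "(\<Sum>y\<in>UNIV. step_dist P \<pi> (Suc n) x y)
     = (\<Sum>z\<in>UNIV. step_dist P \<pi> n x z * (\<Sum>y\<in>UNIV. trans_pol P \<pi> z y))"
    by (simp only: step_dist.simps sum_distrib_left) (rule sum.swap)
  also have "\<dots> = 1" using Suc trans_pol_sum[OF assms] by simp
  finally show ?case using Suc trans_pol_nonneg[OF assms]
    by (auto intro!: sum_nonneg mult_nonneg_nonneg)
qed

lemma step_dist_le1:
  assumes "is_mdp P \<gamma>" "is_policy \<pi>"
  shows "step_dist P \<pi> n x y \<le> 1"
proof -
  have "step_dist P \<pi> n x y \<le> (\<Sum>y\<in>UNIV. step_dist P \<pi> n x y)"
    using step_dist_prop[OF assms] by (intro member_le_sum) auto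
  then show ?thesis using step_dist_prop[OF assms] by simp
qed

definition occ where "occ P \<pi> \<gamma> x y = (\<Sum>n. \<gamma> ^ n * step_dist P \<pi> n x y)"

lemma occ_sums:
  assumes "is_mdp P \<gamma>" "is_policy \<pi>"
  shows "(\<lambda>n. \<gamma> ^ n * step_dist P \<pi> n x y) sums occ P \<pi> \<gamma> x y"
proof -
  have g: "0 \<le> \<gamma>" "\<gamma> < 1" using assms(1) unfolding is_mdp_def by auto
  have "summable (\<lambda>n. \<gamma> ^ n * step_dist P \<pi> n x y)"
  proof (rule summable_comparison_test[OF _ summable_geometric[of \<gamma>]])
    show "\<exists>N. \<forall>n\<ge>N. norm (\<gamma> ^ n * step_dist P \<pi> n x y) \<le> \<gamma> ^ n"
      using g step_dist_prop[OF assms] step_dist_le1[OF assms]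
      by (auto simp: abs_mult intro!: mult_left_le)
  qed (use g in auto)
  then show ?thesis unfolding occ_def by (simp add: summable_sums)
qed

lemma occ_series:
  assumes "is_mdp P \<gamma>" "is_policy \<pi>"
  shows "(\<lambda>n. \<gamma> ^ n * (\<Sum>y\<in>UNIV. step_dist P \<pi> n x y * X y)) sums (\<Sum>y\<in>UNIV. occ P \<pi> \<gamma> x y * X y)"
proof -
  have "(\<lambda>n. \<Sum>y\<in>UNIV. \<gamma> ^ n * step_dist P \<pi> n x y * X y) sums (\<Sum>y\<in>UNIV. occ P \<pi> \<gamma> x y * X y)"
    by (intro sums_sum sums_mult2 occ_sums[OF assms])
  then show ?thesis by (simp add: sum_distrib_left mult.assoc)
qed

lemma occ_nonneg:
  assumes "is_mdp P \<gamma>" "is_policy \<pi>"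
  shows "0 \<le> occ P \<pi> \<gamma> x y"
  using assms step_dist_prop[OF assms] unfolding is_mdp_def
  by (intro sums_le[OF _ sums_zero occ_sums[OF assms]]) auto

lemma occ_total:
  assumes "is_mdp P \<gamma>" "is_policy \<pi>"
  shows "(\<Sum>y\<in>UNIV. occ P \<pi> \<gamma> x y) = 1 / (1 - \<gamma>)"
proof -
  have g: "0 \<le> \<gamma>" "\<gamma> < 1" using assms(1) unfolding is_mdp_def by auto
  have "(\<lambda>n. \<gamma> ^ n * (\<Sum>y\<in>UNIV. step_dist P \<pi> n x y * 1)) sums (\<Sum>y\<in>UNIV. occ P \<pi> \<gamma> x y * 1)"
    by (rule occ_series[OF assms])
  moreover have "(\<lambda>n. \<gamma> ^ n * (\<Sum>y\<in>UNIV. step_dist P \<pi> n x y * 1)) = (\<lambda>n. \<gamma> ^ n)"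
    using step_dist_prop[OF assms] by simp
  ultimately show ?thesis using geometric_sums[of \<gamma>] g sums_unique2 by fastforce
qed


lemma aux_ring: assumes "(X::real) = a + g * b - d" shows "q * a + (g * q * b - q * d) = q * X"
  unfolding assms by (simp add: algebra_simps)

lemma pdl:
  assumes mdp: "is_mdp P \<gamma>" and ps: "is_policy ps"
  shows "V_fun P c h \<gamma> ps x - W x
    = (\<Sum>y\<in>UNIV. occ P ps \<gamma> x y *
        (stage_cost c h ps y + \<gamma> * (\<Sum>z\<in>UNIV. trans_pol P ps y z * W z) - W y))"
proof -
  have g: "0 \<le> \<gamma>" "\<gamma> < 1" using mdp unfolding is_mdp_def by auto
  let ?D = "\<lambda>n y. step_dist P ps n x y"
  define f where "f n = \<gamma> ^ n * (\<Sum>y\<in>UNIV. ?D n y * W y)" for n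
  define B where "B = (\<Sum>y\<in>UNIV. \<bar>W y\<bar>)"
  have fb: "norm (f n) \<le> \<gamma> ^ n * B" for n
  proof -
    have "\<bar>\<Sum>y\<in>UNIV. ?D n y * W y\<bar> \<le> (\<Sum>y\<in>UNIV. \<bar>?D n y * W y\<bar>)" by (rule sum_abs)
    also have "\<dots> \<le> B" unfolding B_def
      using step_dist_prop[OF mdp ps] step_dist_le1[OF mdp ps]
      by (intro sum_mono) (auto simp: abs_mult intro!: mult_left_le_one_le)
    finally have bb: "\<bar>\<Sum>y\<in>UNIV. ?D n y * W y\<bar> \<le> B" .
    have "norm (f n) = \<gamma> ^ n * \<bar>\<Sum>y\<in>UNIV. ?D n y * W y\<bar>"
      unfolding f_def using g by (simp add: abs_mult)
    also have "\<dots> \<le> \<gamma> ^ n * B" using bb g by (intro mult_left_mono) auto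
    finally show ?thesis .
  qed
  have f0: "f \<longlonglongrightarrow> 0"
    by (rule Lim_null_comparison[OF always_eventually[OF allI[OF fb]]])
       (intro tendsto_mult_left_zero LIMSEQ_power_zero, use g in auto)
  have tel: "(\<lambda>n. f (Suc n) - f n) sums (0 - W x)"
  proof -
    have "(\<Sum>y\<in>UNIV. (if x = y then 1 else 0) * W y) = (\<Sum>y\<in>UNIV. if x = y then W y else 0)"
      by (rule sum.cong) auto
    then have "f 0 = W x" unfolding f_def by simp
    then show ?thesis using telescope_sums[OF f0] by simp
  qed
  have vs: "(\<lambda>n. \<gamma> ^ n * (\<Sum>y\<in>UNIV. ?D n y * stage_cost c h ps y)) sums V_fun P c h \<gamma> ps x"
    using occ_series[OF mdp ps, of x "stage_cost c h ps"] unfolding V_fun_def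
    by (rule summable_sums[OF sums_summable])
  have step: "(\<Sum>y\<in>UNIV. ?D n y * (\<Sum>z\<in>UNIV. trans_pol P ps y z * W z)) = (\<Sum>z\<in>UNIV. ?D (Suc n) z * W z)" for n
    by (simp only: step_dist.simps sum_distrib_left sum_distrib_right mult.assoc) (rule sum.swap)
  have S1: "(\<lambda>n. \<gamma> ^ n * (\<Sum>y\<in>UNIV. ?D n y * stage_cost c h ps y) + (f (Suc n) - f n)) sums (V_fun P c h \<gamma> ps x + (0 - W x))"
    by (intro sums_add vs tel)
  have S2: "(\<lambda>n. \<gamma> ^ n * (\<Sum>y\<in>UNIV. ?D n y * stage_cost c h ps y) + (f (Suc n) - f n))
     = (\<lambda>n. \<gamma> ^ n * (\<Sum>y\<in>UNIV. ?D n y * (stage_cost c h ps y + \<gamma> * (\<Sum>z\<in>UNIV. trans_pol P ps y z * W z) - W y)))"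
  proof
    fix n
    have "(\<Sum>y\<in>UNIV. ?D n y * (stage_cost c h ps y + \<gamma> * (\<Sum>z\<in>UNIV. trans_pol P ps y z * W z) - W y))
       = (\<Sum>y\<in>UNIV. ?D n y * stage_cost c h ps y) + \<gamma> * (\<Sum>y\<in>UNIV. ?D n y * (\<Sum>z\<in>UNIV. trans_pol P ps y z * W z))
         - (\<Sum>y\<in>UNIV. ?D n y * W y)"
    proof -
      have "?D n y * (stage_cost c h ps y + \<gamma> * (\<Sum>z\<in>UNIV. trans_pol P ps y z * W z) - W y)
        = ?D n y * stage_cost c h ps y + \<gamma> * (?D n y * (\<Sum>z\<in>UNIV. trans_pol P ps y z * W z)) - ?D n y * W y" for y
        by (simp add: algebra_simps)
      then show ?thesis by (simp only: sum.distrib sum_subtractf sum_distrib_left)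
    qed
    then have e2: "(\<Sum>y\<in>UNIV. ?D n y * (stage_cost c h ps y + \<gamma> * (\<Sum>z\<in>UNIV. trans_pol P ps y z * W z) - W y))
       = (\<Sum>y\<in>UNIV. ?D n y * stage_cost c h ps y) + \<gamma> * (\<Sum>z\<in>UNIV. ?D (Suc n) z * W z)
         - (\<Sum>y\<in>UNIV. ?D n y * W y)" by (simp only: step)
    show "\<gamma> ^ n * (\<Sum>y\<in>UNIV. ?D n y * stage_cost c h ps y) + (f (Suc n) - f n)
       = \<gamma> ^ n * (\<Sum>y\<in>UNIV. ?D n y * (stage_cost c h ps y + \<gamma> * (\<Sum>z\<in>UNIV. trans_pol P ps y z * W z) - W y))"
      unfolding f_def power_Suc by (rule aux_ring[OF e2])
  qed
  have "V_fun P c h \<gamma> ps x + (0 - W x) = (\<Sum>y\<in>UNIV. occ P ps \<gamma> x y *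
        (stage_cost c h ps y + \<gamma> * (\<Sum>z\<in>UNIV. trans_pol P ps y z * W z) - W y))"
    by (rule sums_unique2[OF _ occ_series[OF mdp ps]]) (rule S1[unfolded S2])
  then show ?thesis by simp
qed


lemma psi_eq:
  assumes "p \<in> prob_simplex"
  shows "psi_fun P c h \<gamma> \<pi> x p =
    (\<Sum>a\<in>UNIV. p $ a * c x a) + h x p
     + \<gamma> * (\<Sum>y\<in>UNIV. (\<Sum>a\<in>UNIV. p $ a * P x a y) * V_fun P c h \<gamma> \<pi> y)
     - V_fun P c h \<gamma> \<pi> x"
proof -
  let ?V = "V_fun P c h \<gamma> \<pi>"
  have s1: "(\<Sum>a\<in>UNIV. p $ a) = 1" using assms unfolding prob_simplex_def by simp
  define S where "S a = (\<Sum>y\<in>UNIV. P x a y * ?V y)" for a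
  have e: "Q_fun P c h \<gamma> \<pi> x a * p $ a = p $ a * c x a + h x (\<pi> x) * p $ a + \<gamma> * (p $ a * S a)" for a
    unfolding Q_fun_def S_def by (simp add: algebra_simps)
  have "(\<Sum>a\<in>UNIV. Q_fun P c h \<gamma> \<pi> x a * p $ a)
      = (\<Sum>a\<in>UNIV. p $ a * c x a) + h x (\<pi> x) * (\<Sum>a\<in>UNIV. p $ a)
        + \<gamma> * (\<Sum>a\<in>UNIV. p $ a * S a)"
    unfolding e sum.distrib by (simp only: sum_distrib_left)
  then have "(\<Sum>a\<in>UNIV. Q_fun P c h \<gamma> \<pi> x a * p $ a)
      = (\<Sum>a\<in>UNIV. p $ a * c x a) + h x (\<pi> x) * (\<Sum>a\<in>UNIV. p $ a)
        + \<gamma> * (\<Sum>a\<in>UNIV. p $ a * (\<Sum>y\<in>UNIV. P x a y * ?V y))" unfolding S_def .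
  also have "(\<Sum>a\<in>UNIV. p $ a * (\<Sum>y\<in>UNIV. P x a y * ?V y))
      = (\<Sum>y\<in>UNIV. (\<Sum>a\<in>UNIV. p $ a * P x a y) * ?V y)"
    by (simp only: sum_distrib_left sum_distrib_right mult.assoc) (rule sum.swap)
  finally show ?thesis unfolding psi_fun_def using s1 by simp
qed


lemma pdl_psi:
  assumes mdp: "is_mdp P \<gamma>" and ps: "is_policy ps"
  shows "V_fun P c h \<gamma> ps x - V_fun P c h \<gamma> \<pi> x
    = (\<Sum>y\<in>UNIV. occ P ps \<gamma> x y * psi_fun P c h \<gamma> \<pi> y (ps y))"
proof -
  have "psi_fun P c h \<gamma> \<pi> y (ps y) = stage_cost c h ps y
     + \<gamma> * (\<Sum>z\<in>UNIV. trans_pol P ps y z * V_fun P c h \<gamma> \<pi> z) - V_fun P c h \<gamma> \<pi> y" for y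
    using psi_eq[of "ps y" P c h \<gamma> \<pi> y] ps unfolding is_policy_def stage_cost_def trans_pol_def
    by simp
  then show ?thesis using pdl[OF mdp ps, of c h x "V_fun P c h \<gamma> \<pi>"] by simp
qed

lemma simplex_compact: "compact (prob_simplex :: (real^'a::finite) set)"
proof -
  have "closed (prob_simplex :: (real^'a) set)"
    unfolding prob_simplex_def
    by (intro closed_Collect_conj closed_Collect_all closed_Collect_le closed_Collect_eq continuous_intros)
  moreover have "bounded (prob_simplex :: (real^'a) set)"
    unfolding bounded_iff
  proof (intro exI ballI)
    fix p :: "real^'a" assume "p \<in> prob_simplex"
    then have "(\<Sum>i\<in>UNIV. \<bar>p$i\<bar>) = 1" unfolding prob_simplex_def by simp
    then show "norm p \<le> 1" using norm_le_l1_cart[of p] by simp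
  qed
  ultimately show ?thesis using compact_eq_bounded_closed by blast
qed

lemma lsc_bdd_below:
  fixes f :: "'b::topological_space \<Rightarrow> real"
  assumes "compact S" "closed_fun_on S f"
  shows "\<exists>m. \<forall>x\<in>S. m \<le> f x"
proof -
  let ?U = "\<lambda>n::nat. - {x\<in>S. f x \<le> - real n}"
  have opn: "open (?U n)" for n using assms(2) unfolding closed_fun_on_def
    by (simp add: open_Compl)
  have cov: "S \<subseteq> (\<Union>n\<in>UNIV. ?U n)"
  proof
    fix x assume "x \<in> S"
    obtain n :: nat where "- f x < real n" using reals_Archimedean2 by blast
    then show "x \<in> (\<Union>n\<in>UNIV. ?U n)" by (intro UN_I[of n]) auto
  qed
  obtain C' where C': "C' \<subseteq> UNIV" "finite C'" "S \<subseteq> (\<Union>n\<in>C'. ?U n)"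
    using compactE_image[OF assms(1) opn cov] by blast
  define N where "N = Max (insert 0 C')"
  have "\<forall>x\<in>S. - real N \<le> f x"
  proof
    fix x assume "x \<in> S"
    then obtain n where n: "n \<in> C'" "x \<in> ?U n" using C'(3) by blast
    have "n \<le> N" unfolding N_def using n(1) C'(2) by simp
    then show "- real N \<le> f x" using n(2) \<open>x \<in> S\<close> by auto
  qed
  then show ?thesis by blast
qed

lemma psi_neg_bound:
  assumes "p \<in> prob_simplex" "m \<le> h y p"
  shows "- psi_fun P c h \<gamma> \<pi> y p \<le> (\<Sum>a\<in>UNIV. \<bar>Q_fun P c h \<gamma> \<pi> y a\<bar>) + V_fun P c h \<gamma> \<pi> y - m + h y (\<pi> y)"
proof -
  have "- (\<Sum>a\<in>UNIV. Q_fun P c h \<gamma> \<pi> y a * p $ a) \<le> \<bar>\<Sum>a\<in>UNIV. Q_fun P c h \<gamma> \<pi> y a * p $ a\<bar>" by simp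
  also have "\<dots> \<le> (\<Sum>a\<in>UNIV. \<bar>Q_fun P c h \<gamma> \<pi> y a * p $ a\<bar>)" by (rule sum_abs)
  also have "\<dots> \<le> (\<Sum>a\<in>UNIV. \<bar>Q_fun P c h \<gamma> \<pi> y a\<bar>)"
  proof (rule sum_mono)
    fix a
    have p: "0 \<le> p $ a" "p $ a \<le> 1"
    proof -
      show "0 \<le> p $ a" using assms(1) unfolding prob_simplex_def by simp
      have "p $ a \<le> (\<Sum>b\<in>UNIV. p $ b)" using assms(1) unfolding prob_simplex_def
        by (intro member_le_sum) auto
      then show "p $ a \<le> 1" using assms(1) unfolding prob_simplex_def by simp
    qed
    then show "\<bar>Q_fun P c h \<gamma> \<pi> y a * p $ a\<bar> \<le> \<bar>Q_fun P c h \<gamma> \<pi> y a\<bar>"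
      by (simp add: abs_mult mult_left_le)
  qed
  finally show ?thesis using assms(2) unfolding psi_fun_def by simp
qed



theorem proposition2p3:
  fixes P :: "'s::finite \<Rightarrow> 'a::finite \<Rightarrow> 's \<Rightarrow> real"
    and c :: "'s \<Rightarrow> 'a \<Rightarrow> real"
    and h :: "'s \<Rightarrow> real^'a \<Rightarrow> real"
    and \<gamma> :: real
    and pstar :: "'s \<Rightarrow> real^'a"
    and M :: "'w measure"
    and pol :: "nat \<Rightarrow> 'w \<Rightarrow> ('s \<Rightarrow> real^'a)"
    and k :: nat
    and s :: 's
  assumes mdp: "is_mdp P \<gamma>"
    and h_convex: "\<forall>x. convex_on prob_simplex (h x)"
    and h_closed: "\<forall>x. closed_fun_on prob_simplex (h x)"
    and pstar_policy: "is_policy pstar"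
    and pstar_opt: "\<forall>\<pi>. is_policy \<pi> \<longrightarrow> (\<forall>x. V_fun P c h \<gamma> pstar x \<le> V_fun P c h \<gamma> \<pi> x)"
    and prob: "prob_space M"
    and k_pos: "k \<ge> 1"
    and pol_policy: "\<forall>t<k. \<forall>\<omega>\<in>space M. is_policy (pol t \<omega>)"
    and V_int: "\<forall>t<k. \<forall>x. integrable M (\<lambda>\<omega>. V_fun P c h \<gamma> (pol t \<omega>) x)"
    and g_int: "\<forall>x. integrable M (\<lambda>\<omega>. agg_gap P c h \<gamma> k (\<lambda>t. pol t \<omega>) x)"
  shows "(\<Sum>t<k. (\<integral>\<omega>. (V_fun P c h \<gamma> (pol t \<omega>) s - V_fun P c h \<gamma> pstar s) \<partial>M))
    \<le> (1 / (1 - \<gamma>)) * Max (range (\<lambda>x. (\<integral>\<omega>. agg_gap P c h \<gamma> k (\<lambda>t. pol t \<omega>) x \<partial>M)))"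
proof -
  interpret prob_space M by (rule prob)
  let ?V = "\<lambda>\<pi>. V_fun P c h \<gamma> \<pi>"
  let ?G = "\<lambda>\<omega> x. agg_gap P c h \<gamma> k (\<lambda>t. pol t \<omega>) x"
  let ?w = "occ P pstar \<gamma> s"
  define Mx where "Mx = Max (range (\<lambda>x. (\<integral>\<omega>. ?G \<omega> x \<partial>M)))"
  have wnn: "0 \<le> ?w y" for y by (rule occ_nonneg[OF mdp pstar_policy])
  have hb: "\<exists>m. \<forall>p\<in>prob_simplex. m \<le> h y p" for y
    using lsc_bdd_below[OF simplex_compact] h_closed by blast
  have pw: "(\<Sum>t<k. ?V (pol t \<omega>) s - ?V pstar s) \<le> (\<Sum>y\<in>UNIV. ?w y * ?G \<omega> y)" for \<omega>
  proof -
    have "(\<Sum>t<k. ?V (pol t \<omega>) s - ?V pstar s)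
        = (\<Sum>t<k. \<Sum>y\<in>UNIV. ?w y * (- psi_fun P c h \<gamma> (pol t \<omega>) y (pstar y)))"
    proof (rule sum.cong[OF refl])
      fix t
      show "?V (pol t \<omega>) s - ?V pstar s = (\<Sum>y\<in>UNIV. ?w y * (- psi_fun P c h \<gamma> (pol t \<omega>) y (pstar y)))"
        using pdl_psi[OF mdp pstar_policy, of c h s "pol t \<omega>"]
        by (simp add: sum_negf)
    qed
    also have "\<dots> = (\<Sum>y\<in>UNIV. ?w y * (- (\<Sum>t<k. psi_fun P c h \<gamma> (pol t \<omega>) y (pstar y))))"
      by (simp only: sum_negf[symmetric] sum_distrib_left) (rule sum.swap)
    also have "\<dots> \<le> (\<Sum>y\<in>UNIV. ?w y * ?G \<omega> y)"
    proof (rule sum_mono, rule mult_left_mono[OF _ wnn])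
      fix y
      obtain m where m: "\<forall>p\<in>prob_simplex. m \<le> h y p" using hb by blast
      have "bdd_above ((\<lambda>p. - (\<Sum>t<k. psi_fun P c h \<gamma> (pol t \<omega>) y p)) ` prob_simplex)"
      proof (rule bdd_aboveI2)
        fix p :: "real^'a" assume p: "p \<in> prob_simplex"
        have "- (\<Sum>t<k. psi_fun P c h \<gamma> (pol t \<omega>) y p) = (\<Sum>t<k. - psi_fun P c h \<gamma> (pol t \<omega>) y p)"
          by (simp add: sum_negf)
        also have "\<dots> \<le> (\<Sum>t<k. (\<Sum>a\<in>UNIV. \<bar>Q_fun P c h \<gamma> (pol t \<omega>) y a\<bar>) + ?V (pol t \<omega>) y - m + h y (pol t \<omega> y))"
          using m p by (intro sum_mono psi_neg_bound[OF p]) auto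
        finally show "- (\<Sum>t<k. psi_fun P c h \<gamma> (pol t \<omega>) y p) \<le> (\<Sum>t<k. (\<Sum>a\<in>UNIV. \<bar>Q_fun P c h \<gamma> (pol t \<omega>) y a\<bar>) + ?V (pol t \<omega>) y - m + h y (pol t \<omega> y))" .
      qed
      moreover have "pstar y \<in> prob_simplex" using pstar_policy unfolding is_policy_def by blast
      ultimately show "- (\<Sum>t<k. psi_fun P c h \<gamma> (pol t \<omega>) y (pstar y)) \<le> ?G \<omega> y"
        unfolding agg_gap_def by (rule cSUP_upper2) simp
    qed
    finally show ?thesis .
  qed
  have int1: "integrable M (\<lambda>\<omega>. ?V (pol t \<omega>) s - ?V pstar s)" if "t < k" for t
    using V_int that by (intro Bochner_Integration.integrable_diff integrable_const) auto
  have "(\<Sum>t<k. (\<integral>\<omega>. (?V (pol t \<omega>) s - ?V pstar s) \<partial>M))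
      = (\<integral>\<omega>. (\<Sum>t<k. ?V (pol t \<omega>) s - ?V pstar s) \<partial>M)"
    using Bochner_Integration.integral_sum[where I="{..<k}" and M=M and f="\<lambda>t \<omega>. ?V (pol t \<omega>) s - ?V pstar s"] int1 by simp
  also have "\<dots> \<le> (\<integral>\<omega>. (\<Sum>y\<in>UNIV. ?w y * ?G \<omega> y) \<partial>M)"
    using int1 g_int pw by (intro integral_mono) auto
  also have "\<dots> = (\<Sum>y\<in>UNIV. ?w y * (\<integral>\<omega>. ?G \<omega> y \<partial>M))"
    using Bochner_Integration.integral_sum[where I=UNIV and M=M and f="\<lambda>y \<omega>. ?w y * ?G \<omega> y"] g_int by simp
  also have "\<dots> \<le> (\<Sum>y\<in>UNIV. ?w y * Mx)"
    unfolding Mx_def by (intro sum_mono mult_left_mono[OF _ wnn] Max_ge) auto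
  also have "\<dots> = (1 / (1 - \<gamma>)) * Mx"
    using occ_total[OF mdp pstar_policy, of s] by (simp add: sum_distrib_right[symmetric])
  finally show ?thesis unfolding Mx_def .
qed

end
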